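(* Let $G$ be a subcubic graph (maximum degree at most $3$), and let $D$ be a maximum dissociation set of $G$ which, among all maximum dissociation sets of $G$, maximizes the number of isolated vertices of $G[D]$. Then the graph $G[V(G)\setminus D]$ has maximum degree at most $1$.
   Context: All graphs are finite, simple and undirected. A set $D$ of vertices of $G$ is a dissociation set if the induced subgraph $G[D]$ has maximum degree at most $1$; the dissociation number $\mathrm{diss}(G)$ is the maximum order of a dissociation set, and a maximum dissociation set is one of order $\mathrm{diss}(G)$. *)

theory Defs
  imports Main
begin

definition simple_graph :: "'a set \<Rightarrow> ('a \<Rightarrow> 'a \<Rightarrow> bool) \<Rightarrow> bool" where
  "simple_graph V E \<longleftrightarrow> finite V \<and> (\<forall>u v. E u v \<longrightarrow> u \<in> V \<and> v \<in> V)
     \<and> (\<forall>u v. E u v \<longrightarrow> E v u) \<and> (\<forall>v. \<not> E v v)"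

definition deg_in :: "('a \<Rightarrow> 'a \<Rightarrow> bool) \<Rightarrow> 'a set \<Rightarrow> 'a \<Rightarrow> nat" where
  "deg_in E S v = card {u \<in> S. E v u}"

definition max_deg_le :: "('a \<Rightarrow> 'a \<Rightarrow> bool) \<Rightarrow> 'a set \<Rightarrow> nat \<Rightarrow> bool" where
  "max_deg_le E S k \<longleftrightarrow> (\<forall>v\<in>S. deg_in E S v \<le> k)"

definition subcubic :: "'a set \<Rightarrow> ('a \<Rightarrow> 'a \<Rightarrow> bool) \<Rightarrow> bool" where
  "subcubic V E \<longleftrightarrow> max_deg_le E V 3"

definition dissociation_set :: "'a set \<Rightarrow> ('a \<Rightarrow> 'a \<Rightarrow> bool) \<Rightarrow> 'a set \<Rightarrow> bool" where
  "dissociation_set V E D \<longleftrightarrow> D \<subseteq> V \<and> max_deg_le E D 1"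

definition diss :: "'a set \<Rightarrow> ('a \<Rightarrow> 'a \<Rightarrow> bool) \<Rightarrow> nat" where
  "diss V E = Max {card D | D. dissociation_set V E D}"

definition max_dissociation_set :: "'a set \<Rightarrow> ('a \<Rightarrow> 'a \<Rightarrow> bool) \<Rightarrow> 'a set \<Rightarrow> bool" where
  "max_dissociation_set V E D \<longleftrightarrow> dissociation_set V E D \<and> card D = diss V E"

definition num_isolated :: "('a \<Rightarrow> 'a \<Rightarrow> bool) \<Rightarrow> 'a set \<Rightarrow> nat" where
  "num_isolated E D = card {v \<in> D. deg_in E D v = 0}"

end

theory Submission
  imports Defs
begin

lemma deg_le1_iff:
  assumes "finite S"
  shows "deg_in E S z \<le> 1 \<longleftrightarrow> (\<forall>a\<in>S. \<forall>b\<in>S. E z a \<longrightarrow> E z b \<longrightarrow> a = b)"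
proof -
  have f: "finite {u \<in> S. E z u}" using assms by simp
  show ?thesis unfolding deg_in_def using card_le_Suc0_iff_eq[OF f] by auto
qed

lemma deg0_iff:
  assumes "finite S"
  shows "deg_in E S z = 0 \<longleftrightarrow> (\<forall>a\<in>S. \<not> E z a)"
  unfolding deg_in_def using assms by auto

lemma diss_ge:
  assumes "simple_graph V E" "dissociation_set V E D'"
  shows "card D' \<le> diss V E"
proof -
  have fin: "finite V" using assms(1) by (simp add: simple_graph_def)
  have "{card D | D. dissociation_set V E D} \<subseteq> card ` Pow V"
    by (auto simp: dissociation_set_def)
  hence "finite {card D | D. dissociation_set V E D}"
    using fin finite_subset by blast
  thus ?thesis unfolding diss_def using assms(2) by (auto intro!: Max_ge)
qed

theorem mainTheorem4:
  fixes V :: "'a set" and E :: "'a \<Rightarrow> 'a \<Rightarrow> bool" and D :: "'a set"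
  assumes "simple_graph V E"
    and "subcubic V E"
    and "max_dissociation_set V E D"
    and "\<forall>D'. max_dissociation_set V E D' \<longrightarrow> num_isolated E D' \<le> num_isolated E D"
  shows "max_deg_le E (V - D) 1"
proof -
  have G: "finite V" "\<And>u v. E u v \<Longrightarrow> u \<in> V \<and> v \<in> V" "\<And>u v. E u v \<Longrightarrow> E v u" "\<And>v. \<not> E v v"
    using assms(1) unfolding simple_graph_def by metis+
  have DV: "D \<subseteq> V" and Dd: "\<forall>z\<in>D. deg_in E D z \<le> 1" and cD: "card D = diss V E"
    using assms(3) unfolding max_dissociation_set_def dissociation_set_def max_deg_le_def by blast+
  have finD: "finite D" using DV G(1) finite_subset by blast
  have Dp: "\<And>z a b. z \<in> D \<Longrightarrow> a \<in> D \<Longrightarrow> b \<in> D \<Longrightarrow> E z a \<Longrightarrow> E z b \<Longrightarrow> a = b"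
  proof -
    fix z a b assume h: "z \<in> D" "a \<in> D" "b \<in> D" "E z a" "E z b"
    have "deg_in E D z \<le> 1" using Dd h(1) by blast
    thus "a = b" using h deg_le1_iff[OF finD, of E z] by blast
  qed
  have mkdiss: "dissociation_set V E S"
    if "S \<subseteq> V" "\<And>z a b. z \<in> S \<Longrightarrow> a \<in> S \<Longrightarrow> b \<in> S \<Longrightarrow> E z a \<Longrightarrow> E z b \<Longrightarrow> a = b" for S
  proof -
    have fS: "finite S" using that(1) G(1) finite_subset by blast
    have "\<forall>z\<in>S. deg_in E S z \<le> 1"
    proof
      fix z assume "z \<in> S"
      show "deg_in E S z \<le> 1" unfolding deg_le1_iff[OF fS] using that(2) \<open>z \<in> S\<close> by blast
    qed
    thus ?thesis using that(1) unfolding dissociation_set_def max_deg_le_def by blast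
  qed
  show ?thesis unfolding max_deg_le_def
  proof
    fix v assume v: "v \<in> V - D"
    have finVD: "finite (V - D)" using G(1) by simp
    show "deg_in E (V - D) v \<le> 1"
    proof (rule ccontr)
      assume "\<not> ?thesis"
      then obtain u w where uw: "u \<in> V - D" "w \<in> V - D" "E v u" "E v w" "u \<noteq> w"
        using deg_le1_iff[OF finVD] by blast
      have one: "x1 = x2" if "x1 \<in> D" "x2 \<in> D" "E v x1" "E v x2" for x1 x2
      proof (rule ccontr)
        assume ne: "x1 \<noteq> x2"
        have sub: "{u, w, x1, x2} \<subseteq> {a \<in> V. E v a}" using that uw G(2) by auto
        have d: "u \<notin> {w, x1, x2}" "w \<notin> {x1, x2}" "x1 \<notin> {x2}" using ne uw that by auto
        have "card {u, w, x1, x2} = 4" using d by simp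
        moreover have "card {u, w, x1, x2} \<le> card {a \<in> V. E v a}"
          using sub G(1) by (intro card_mono) auto
        moreover have "card {a \<in> V. E v a} \<le> 3"
          using assms(2) v by (auto simp: subcubic_def max_deg_le_def deg_in_def)
        ultimately show False by simp
      qed
      have vD: "v \<notin> D" "v \<in> V" using v by auto
      show False
      proof (cases "\<exists>x\<in>D. E v x")
        case False
        have "dissociation_set V E (insert v D)"
        proof (rule mkdiss)
          show "insert v D \<subseteq> V" using DV vD by blast
        next
          fix z a b assume h: "z \<in> insert v D" "a \<in> insert v D" "b \<in> insert v D" "E z a" "E z b"
          have nv: "\<And>q. q \<in> D \<Longrightarrow> \<not> E q v" using False G(3) by blast
          show "a = b"
          proof (cases "z = v")
            case True thus ?thesis using h False G(4) by auto
          next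
            case zv: False
            hence zD: "z \<in> D" using h by auto
            have "a \<in> D" using h nv zD by auto
            moreover have "b \<in> D" using h nv zD by auto
            ultimately show ?thesis using Dp zD h by blast
          qed
        qed
        hence "card (insert v D) \<le> diss V E" using diss_ge assms(1) by blast
        thus False using cD finD vD by simp
      next
        case True
        then obtain x where x: "x \<in> D" "E v x" by blast
        show False
        proof (cases "\<exists>y\<in>D. E x y")
          case False
          have "dissociation_set V E (insert v D)"
          proof (rule mkdiss)
            show "insert v D \<subseteq> V" using DV vD by blast
          next
            fix z a b assume h: "z \<in> insert v D" "a \<in> insert v D" "b \<in> insert v D" "E z a" "E z b"
            have nv: "\<And>q. q \<in> D \<Longrightarrow> E q v \<Longrightarrow> q = x" using one x G(3) by blast
            show "a = b"
            proof (cases "z = v")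
              case True
              hence "a \<noteq> v" "b \<noteq> v" using h G(4) by auto
              hence "a \<in> D" "b \<in> D" using h by auto
              thus ?thesis using h True one by blast
            next
              case zv: False
              hence zD: "z \<in> D" using h by auto
              show ?thesis
              proof (cases "z = x")
                case True
                have "a \<notin> D" using False h True by blast
                moreover have "b \<notin> D" using False h True by blast
                ultimately show ?thesis using h by auto
              next
                case zx: False
                have "a \<in> D" using h nv zD zx by auto
                moreover have "b \<in> D" using h nv zD zx by auto
                ultimately show ?thesis using Dp zD h by blast
              qed
            qed
          qed
          hence "card (insert v D) \<le> diss V E" using diss_ge assms(1) by blast
          thus False using cD finD vD by simp
        next
          case True
          then obtain y where y: "y \<in> D" "E x y" by blast
          define D' where "D' = insert v (D - {x})"
          have dd: "dissociation_set V E D'"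
            unfolding D'_def
          proof (rule mkdiss)
            show "insert v (D - {x}) \<subseteq> V" using DV vD by blast
          next
            fix z a b assume h: "z \<in> insert v (D - {x})" "a \<in> insert v (D - {x})" "b \<in> insert v (D - {x})" "E z a" "E z b"
            have nv: "\<And>q. q \<in> D \<Longrightarrow> E q v \<Longrightarrow> q = x" using one x G(3) by blast
            show "a = b"
            proof (cases "z = v")
              case True
              have "a \<noteq> v" "b \<noteq> v" using h G(4) True by auto
              hence "a \<in> D" "b \<in> D" "a \<noteq> x" "b \<noteq> x" using h by auto
              hence False using h True one x by blast
              thus ?thesis ..
            next
              case zv: False
              hence zD: "z \<in> D" "z \<noteq> x" using h by auto
              have "a \<in> D" using h nv zD by auto
              moreover have "b \<in> D" using h nv zD by auto
              ultimately show ?thesis using Dp zD h by blast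
            qed
          qed
          have cD': "card D' = card D"
          proof -
            have "card D > 0" using finD x card_gt_0_iff by blast
            thus ?thesis using finD vD x unfolding D'_def by (simp add: card_Diff_singleton)
          qed
          have mD': "max_dissociation_set V E D'"
            using dd cD' cD by (simp add: max_dissociation_set_def)
          have finD': "finite D'" unfolding D'_def using finD by simp
          let ?I = "{z \<in> D. deg_in E D z = 0}"
          let ?I' = "{z \<in> D'. deg_in E D' z = 0}"
          have xI: "x \<notin> ?I" using y deg0_iff[OF finD] by blast
          have "insert v ?I \<subseteq> ?I'"
          proof
            fix z assume z: "z \<in> insert v ?I"
            show "z \<in> ?I'"
            proof (cases "z = v")
              case True
              have "\<forall>a\<in>D'. \<not> E v a" unfolding D'_def using G(4) one x by blast
              thus ?thesis using True deg0_iff[OF finD'] unfolding D'_def by auto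
            next
              case False
              hence zI: "z \<in> ?I" using z by auto
              hence zx: "z \<noteq> x" using xI by auto
              have "\<forall>a\<in>D. \<not> E z a" using zI deg0_iff[OF finD] by auto
              moreover have "\<not> E z v" using one zI zx x G(3) by blast
              ultimately have "\<forall>a\<in>D'. \<not> E z a" unfolding D'_def by auto
              thus ?thesis using zI zx deg0_iff[OF finD'] unfolding D'_def by auto
            qed
          qed
          hence "card (insert v ?I) \<le> card ?I'" using finD' by (intro card_mono) auto
          moreover have "card (insert v ?I) = Suc (card ?I)" using finD vD by simp
          moreover have "card ?I' \<le> card ?I"
            using assms(4) mD' by (simp add: num_isolated_def)
          ultimately show False by simp
        qed
      qed
    qed
  qed
qed

end
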